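(* Let $N\ge1$ and consider linear subsystems $\Sigma_1,\dots,\Sigma_N$ and their interconnection $\Sigma$ as described in the context, with safe sets $X_i$, input sets $U_i$, $X=\prod_i X_i$, $U=\prod_i U_i$. For each $i\in[1;N]$ let $\delta_i\ge 0$ and let $C_i^{\delta_i}:\mathbb{R}^{n_i}\rightrightarrows U_i+\delta_i\mathbb{B}$ be a $\delta_i$-relaxed safety controller for $\Sigma_i$ and the relaxed safe set $X_i+\delta_i\mathbb{B}$. Let $X^{\delta}=\prod_{i=1}^N(X_i+\delta_i\mathbb{B})$, $U^{\delta}=\prod_{i=1}^N(U_i+\delta_i\mathbb{B})$, and define $C^{\delta}:\mathbb{R}^n\rightrightarrows U^{\delta}$ by $C^\delta(x)=\emptyset$ for $x\in\mathbb{R}^n\setminus X^\delta$ and, for $x=[x_1;\dots;x_N]\in X^{\delta}$, $$C^{\delta}(x)=\{u=[u_1;\dots;u_N]\in U^{\delta}\mid u_i\in C_i^{\delta_i}(x_i)\ \text{for all } i\in[1;N]\}.$$ Then, with $\delta=\|[\delta_1;\dots;\delta_N]\|$ (infinity norm), $C^{\delta}$ is a $\delta$-relaxed safety controller for the interconnected system $\Sigma$, the relaxed safe set $X+\delta\mathbb{B}$ and the relaxed input set $U+\delta\mathbb{B}$.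
   Context: $\mathbb{B}$ denotes the closed unit ball w.r.t. the infinity norm in the Euclidean space of the appropriate dimension; $+$ between sets is the Minkowski sum, and $a+S=\{a\}+S$. Subsystem $\Sigma_i$ is linear: $x_i(t+1)=A_ix_i(t)+B_iu_i(t)+D_iz_i(t)+w_i(t)$ with $A_i\in\mathbb{R}^{n_i\times n_i}$, $B_i\in\mathbb{R}^{n_i\times m_i}$, $D_i\in\mathbb{R}^{n_i\times p_i}$, $w_i(t)\in W_i\subseteq\mathbb{R}^{n_i}$ (compact disturbance set), and internal input $z_i=[z_{i1};\dots;z_{i(i-1)};z_{i(i+1)};\dots;z_{iN}]\in\mathbb{R}^{p_i}$, $z_{ij}\in\mathbb{R}^{p_{ij}}$; its outputs are $h_{ij}(x_i)=H_{ij}x_i$ with matrices $H_{ij}\in\mathbb{R}^{p_{ji}\times n_i}$ for $j\ne i$. The interconnected system $\Sigma$ has state $x=[x_1;\dots;x_N]\in\mathbb{R}^n$, input $u=[u_1;\dots;u_N]\in\mathbb{R}^m$, disturbance $w\in W=\prod_i W_i$, and transition $f(x,u,w)=[A_1x_1+B_1u_1+D_1z_1+w_1;\dots;A_Nx_N+B_Nu_N+D_Nz_N+w_N]$ with $z_{ij}=H_{ji}x_j$. $X_i\subseteq\mathbb{R}^{n_i}$ and $U_i\subseteq\mathbb{R}^{m_i}$ are compact. For $i\ne j$ there are compact sets $Z_{ij}\subseteq\mathbb{R}^{p_{ij}}$ with $H_{ji}(X_j+\delta_j\mathbb{B})\subseteq Z_{ij}$, and $Z_i=\prod_{j\ne i}Z_{ij}$.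 A $\delta_i$-relaxed safety controller for $\Sigma_i$ and $X_i+\delta_i\mathbb{B}$ is a set-valued map $C_i:\mathbb{R}^{n_i}\rightrightarrows U_i+\delta_i\mathbb{B}$ with (1) $C_i(x_i)\subseteq U_i+\delta_i\mathbb{B}$ for all $x_i$; (2) $\mathrm{dom}(C_i)=\{x_i\mid C_i(x_i)\ne\emptyset\}\subseteq X_i+\delta_i\mathbb{B}$; (3) for all $x_i\in\mathrm{dom}(C_i)$ and $u_i\in C_i(x_i)$: $A_ix_i+B_iu_i+D_iZ_i+W_i\subseteq\mathrm{dom}(C_i)$. A $\delta$-relaxed safety controller for $\Sigma$, $X+\delta\mathbb{B}$ and $U+\delta\mathbb{B}$ is a set-valued map $C:\mathbb{R}^n\rightrightarrows U+\delta\mathbb{B}$ with (1) $C(x)\subseteq U+\delta\mathbb{B}$ for all $x$; (2) $\mathrm{dom}(C)\subseteq X+\delta\mathbb{B}$; (3) for all $x\in\mathrm{dom}(C)$, $u\in C(x)$, $w\in W$: $f(x,u,w)\in\mathrm{dom}(C)$. *)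

theory Defs
  imports "HOL-Analysis.Function_Topology" "Jordan_Normal_Form.Matrix"
begin

text \<open>Vectors of R^d are elements of carrier_vec d; matrices are Jordan_Normal_Form matrices.
  Subsystems are indexed by 0,...,N-1.\<close>

definition scaled_ball :: "nat \<Rightarrow> real \<Rightarrow> real vec set" where
  "scaled_ball d r = {b \<in> carrier_vec d. \<forall>k<d. \<bar>b $ k\<bar> \<le> r}"

definition inflate :: "nat \<Rightarrow> real vec set \<Rightarrow> real \<Rightarrow> real vec set" where
  "inflate d S r = {x + b | x b. x \<in> S \<and> b \<in> scaled_ball d r}"

text \<open>Compactness of a subset of R^d (via the canonical embedding into nat => real,
  which is a homeomorphism of R^d onto a closed subspace of the product space).\<close>
definition vec_to_fun :: "real vec \<Rightarrow> (nat \<Rightarrow> real)" where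
  "vec_to_fun v = (\<lambda>k. if k < dim_vec v then v $ k else 0)"

definition compact_in_R :: "nat \<Rightarrow> real vec set \<Rightarrow> bool" where
  "compact_in_R d S \<longleftrightarrow> S \<subseteq> carrier_vec d \<and> compact (vec_to_fun ` S)"

definition stack :: "real vec list \<Rightarrow> real vec" where
  "stack vs = foldr (\<lambda>v acc. v @\<^sub>v acc) vs (vec 0 (\<lambda>_. 0))"

definition block :: "(nat \<Rightarrow> nat) \<Rightarrow> nat \<Rightarrow> real vec \<Rightarrow> real vec" where
  "block d i x = vec (d i) (\<lambda>k. x $ (sum d {..<i} + k))"

definition stacked_prod :: "(nat \<Rightarrow> nat) \<Rightarrow> nat \<Rightarrow> (nat \<Rightarrow> real vec set) \<Rightarrow> real vec set" where
  "stacked_prod d N S = {x \<in> carrier_vec (sum d {..<N}). \<forall>i<N. block d i x \<in> S i}"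

definition others :: "nat \<Rightarrow> nat \<Rightarrow> nat list" where
  "others N i = filter (\<lambda>j. j \<noteq> i) [0..<N]"

definition Z_set :: "nat \<Rightarrow> (nat \<Rightarrow> nat \<Rightarrow> real vec set) \<Rightarrow> nat \<Rightarrow> real vec set" where
  "Z_set N Z i = {stack (map zz (others N i)) | zz. \<forall>j\<in>set (others N i). zz j \<in> Z i j}"

definition ctrl_dom :: "(real vec \<Rightarrow> real vec set) \<Rightarrow> real vec set" where
  "ctrl_dom C = {x. C x \<noteq> {}}"

definition sub_relaxed_safety_controller ::
  "nat \<Rightarrow> nat \<Rightarrow> real mat \<Rightarrow> real mat \<Rightarrow> real mat \<Rightarrow> real vec set \<Rightarrow> real vec set \<Rightarrow>
   real vec set \<Rightarrow> real vec set \<Rightarrow> real \<Rightarrow> (real vec \<Rightarrow> real vec set) \<Rightarrow> bool" where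
  "sub_relaxed_safety_controller nd md A B D Zi Wi Xi Ui \<delta> C \<longleftrightarrow>
     (\<forall>x. C x \<subseteq> inflate md Ui \<delta>) \<and>
     ctrl_dom C \<subseteq> inflate nd Xi \<delta> \<and>
     (\<forall>x\<in>ctrl_dom C. \<forall>u\<in>C x. \<forall>z\<in>Zi. \<forall>w\<in>Wi. A *\<^sub>v x + B *\<^sub>v u + D *\<^sub>v z + w \<in> ctrl_dom C)"

definition relaxed_safety_controller ::
  "nat \<Rightarrow> nat \<Rightarrow> (real vec \<Rightarrow> real vec \<Rightarrow> real vec \<Rightarrow> real vec) \<Rightarrow> real vec set \<Rightarrow>
   real vec set \<Rightarrow> real vec set \<Rightarrow> real \<Rightarrow> (real vec \<Rightarrow> real vec set) \<Rightarrow> bool" where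
  "relaxed_safety_controller nd md f W X U \<delta> C \<longleftrightarrow>
     (\<forall>x. C x \<subseteq> inflate md U \<delta>) \<and>
     ctrl_dom C \<subseteq> inflate nd X \<delta> \<and>
     (\<forall>x\<in>ctrl_dom C. \<forall>u\<in>C x. \<forall>w\<in>W. f x u w \<in> ctrl_dom C)"

definition internal_input ::
  "nat \<Rightarrow> (nat \<Rightarrow> nat) \<Rightarrow> (nat \<Rightarrow> nat \<Rightarrow> real mat) \<Rightarrow> nat \<Rightarrow> real vec \<Rightarrow> real vec" where
  "internal_input N n H i x = stack (map (\<lambda>j. H j i *\<^sub>v block n j x) (others N i))"

definition interconnection ::
  "nat \<Rightarrow> (nat \<Rightarrow> nat) \<Rightarrow> (nat \<Rightarrow> nat) \<Rightarrow> (nat \<Rightarrow> real mat) \<Rightarrow> (nat \<Rightarrow> real mat) \<Rightarrow>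
   (nat \<Rightarrow> real mat) \<Rightarrow> (nat \<Rightarrow> nat \<Rightarrow> real mat) \<Rightarrow> real vec \<Rightarrow> real vec \<Rightarrow> real vec \<Rightarrow> real vec" where
  "interconnection N n m A B D H x u w =
     stack (map (\<lambda>i. A i *\<^sub>v block n i x + B i *\<^sub>v block m i u
                     + D i *\<^sub>v internal_input N n H i x + block n i w) [0..<N])"

end

theory Submission
  imports Defs
begin


lemma stack_Cons: "stack (v # vs) = v @\<^sub>v stack vs"
  by (simp add: stack_def)

lemma dim_stack: "(\<And>j. j < length vs \<Longrightarrow> dim_vec (vs ! j) = d j) \<Longrightarrow>
   dim_vec (stack vs) = sum d {..<length vs}"
proof (induction vs arbitrary: d)
  case Nil then show ?case by (simp add: stack_def)
next
  case (Cons v vs)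
  have "dim_vec (stack vs) = sum (d \<circ> Suc) {..<length vs}"
    using Cons.prems by (intro Cons.IH) force
  moreover have "dim_vec v = d 0" using Cons.prems[of 0] by simp
  ultimately show ?case by (simp only: stack_Cons length_Cons sum.lessThan_Suc_shift index_append_vec(2)) simp
qed

lemma block_stack: "(\<And>j. j < length vs \<Longrightarrow> dim_vec (vs ! j) = d j) \<Longrightarrow> i < length vs \<Longrightarrow>
   block d i (stack vs) = vs ! i"
proof (induction vs arbitrary: d i)
  case Nil then show ?case by simp
next
  case (Cons v vs)
  have dv: "dim_vec v = d 0" using Cons.prems(1)[of 0] by simp
  have ds: "dim_vec (stack vs) = sum (d \<circ> Suc) {..<length vs}"
    using Cons.prems by (intro dim_stack) force
  show ?case
  proof (cases i)
    case 0
    then show ?thesis using dv by (auto simp: block_def stack_Cons)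
  next
    case (Suc i')
    have IH: "block (d \<circ> Suc) i' (stack vs) = vs ! i'"
      using Cons.prems Suc by (intro Cons.IH) force+
    have dvi: "dim_vec (vs ! i') = d (Suc i')" using Cons.prems(1)[of "Suc i'"] Cons.prems(2) Suc by simp
    have le: "sum (d \<circ> Suc) {..<i'} + d (Suc i') \<le> sum (d \<circ> Suc) {..<length vs}"
    proof -
      have "sum (d \<circ> Suc) {..<i'} + d (Suc i') = sum (d \<circ> Suc) {..<Suc i'}" by simp
      also have "\<dots> \<le> sum (d \<circ> Suc) {..<length vs}"
        using Cons.prems(2) Suc by (intro sum_mono2) auto
      finally show ?thesis .
    qed
    show ?thesis
    proof (rule eq_vecI)
      show "dim_vec (block d i (stack (v # vs))) = dim_vec ((v # vs) ! i)"
        using dvi Suc by (simp add: block_def)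
      fix k assume k: "k < dim_vec ((v # vs) ! i)"
      hence k': "k < d (Suc i')" using dvi Suc by simp
      have "block d i (stack (v # vs)) $ k = (v @\<^sub>v stack vs) $ (d 0 + (sum (d \<circ> Suc) {..<i'} + k))"
      proof -
        have "sum d {..<i} = d 0 + sum (d \<circ> Suc) {..<i'}"
          unfolding Suc sum.lessThan_Suc_shift by simp
        thus ?thesis using k' Suc by (simp add: block_def stack_Cons add.assoc)
      qed
      also have "\<dots> = stack vs $ (sum (d \<circ> Suc) {..<i'} + k)"
        using dv ds le k' by (simp add: index_append_vec)
      also have "\<dots> = block (d \<circ> Suc) i' (stack vs) $ k"
        using k' by (simp add: block_def)
      also have "\<dots> = (v # vs) ! i $ k" using IH Suc by simp
      finally show "block d i (stack (v # vs)) $ k = (v # vs) ! i $ k" .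
    qed
  qed
qed



lemma decomp: "(k::nat) < sum (d::nat\<Rightarrow>nat) {..<(N::nat)} \<Longrightarrow> \<exists>i<N. \<exists>k'<d i. k = sum d {..<i} + k'"
proof (induction N)
  case 0 then show ?case by simp
next
  case (Suc N)
  show ?case
  proof (cases "k < sum d {..<N}")
    case True then show ?thesis using Suc.IH by (meson less_Suc_eq)
  next
    case False
    have "k - sum d {..<N} < d N \<and> k = sum d {..<N} + (k - sum d {..<N})"
      using False Suc.prems by simp
    then show ?thesis by blast
  qed
qed

lemma idx_bound: "(i::nat) < N \<Longrightarrow> (k::nat) < (d::nat\<Rightarrow>nat) i \<Longrightarrow> sum d {..<i} + k < sum d {..<N}"
proof -
  assume "i < N" "k < d i"
  hence "sum d {..<i} + k < sum d {..<Suc i}" by simp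
  also have "\<dots> \<le> sum d {..<N}" using \<open>i < N\<close> by (intro sum_mono2) auto
  finally show ?thesis .
qed

lemma block_ext:
  fixes N :: nat and d :: "nat \<Rightarrow> nat"
  assumes x: "x \<in> carrier_vec (sum d {..<N})" and y: "y \<in> carrier_vec (sum d {..<N})"
    and b: "\<And>i. i < N \<Longrightarrow> block d i x = block d i y"
  shows "x = y"
proof (rule eq_vecI)
  show "dim_vec x = dim_vec y" using x y by simp
  fix k assume k: "k < dim_vec y"
  hence "k < sum d {..<N}" using y by simp
  from decomp[OF this] obtain i k' where i: "i < N" "k' < d i" "k = sum d {..<i} + k'" by blast
  have "x $ k = block d i x $ k'" using i by (simp add: block_def)
  also have "\<dots> = block d i y $ k'" using b i by simp
  also have "\<dots> = y $ k" using i by (simp add: block_def)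
  finally show "x $ k = y $ k" .
qed

lemma block_add:
  fixes N i :: nat and d :: "nat \<Rightarrow> nat" and x y :: "real vec"
  assumes x: "x \<in> carrier_vec (sum d {..<N})" and y: "y \<in> carrier_vec (sum d {..<N})" and i: "i < N"
  shows "block d i (x + y) = block d i x + block d i y"
proof (rule eq_vecI)
  fix k assume "k < dim_vec (block d i x + block d i y)"
  hence k: "k < d i" by (simp add: block_def)
  have b: "sum d {..<i} + k < sum d {..<N}" by (rule idx_bound[of i N k d, OF i k])
  show "block d i (x + y) $ k = (block d i x + block d i y) $ k"
    using x y b k by (simp add: block_def)
qed (simp add: block_def)

lemma stack_map: fixes N :: nat assumes "\<And>i. i < N \<Longrightarrow> f i \<in> carrier_vec (d i)"
  shows "stack (map f [0..<N]) \<in> carrier_vec (sum d {..<N})"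
    "\<And>i. i < N \<Longrightarrow> block d i (stack (map f [0..<N])) = f i"
proof -
  have l: "length (map f [0..<N]) = N" by simp
  have dims: "\<And>j. j < length (map f [0..<N]) \<Longrightarrow> dim_vec (map f [0..<N] ! j) = d j"
  proof -
    fix j assume "j < length (map f [0..<N])"
    hence j: "j < N" by (simp only: l)
    have "map f [0..<N] ! j = f j" using j by (simp only: nth_map_upt add_0)
    thus "dim_vec (map f [0..<N] ! j) = d j" using assms[OF j] by (simp only: carrier_vec_def mem_Collect_eq)
  qed
  have "dim_vec (stack (map f [0..<N])) = sum d {..<length (map f [0..<N])}"
    by (rule dim_stack[OF dims])
  hence "dim_vec (stack (map f [0..<N])) = sum d {..<N}" by (simp only: l)
  thus "stack (map f [0..<N]) \<in> carrier_vec (sum d {..<N})" by (rule carrier_vecI)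
  fix i assume i: "i < N"
  have "block d i (stack (map f [0..<N])) = map f [0..<N] ! i"
    by (rule block_stack) (rule dims, assumption, unfold l, rule i)
  also have "\<dots> = f i" using i by simp
  finally show "block d i (stack (map f [0..<N])) = f i" .
qed



lemma L5:
  assumes x: "x \<in> stacked_prod d N (\<lambda>i. inflate (d i) (S i) (r i))"
    and S: "\<And>i. i < N \<Longrightarrow> S i \<subseteq> carrier_vec (d i)"
    and r: "\<And>i. i < N \<Longrightarrow> r i \<le> R"
  shows "x \<in> inflate (sum d {..<N}) (stacked_prod d N S) R"
proof -
  have "\<forall>i\<in>{..<N}. \<exists>ab. block d i x = fst ab + snd ab \<and> fst ab \<in> S i \<and> snd ab \<in> scaled_ball (d i) (r i)"
    using x by (auto simp: stacked_prod_def inflate_def)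
  then obtain ab where ab: "\<And>i. i < N \<Longrightarrow> block d i x = fst (ab i) + snd (ab i) \<and> fst (ab i) \<in> S i
      \<and> snd (ab i) \<in> scaled_ball (d i) (r i)"
    by (metis bchoice lessThan_iff)
  define a where "a = (\<lambda>i. fst (ab i))"
  define b where "b = (\<lambda>i. snd (ab i))"
  have ac: "\<And>i. i < N \<Longrightarrow> a i \<in> carrier_vec (d i)" using ab S a_def by blast
  have bc: "\<And>i. i < N \<Longrightarrow> b i \<in> carrier_vec (d i)" using ab b_def by (auto simp: scaled_ball_def)
  define av where "av = stack (map a [0..<N])"
  define bv where "bv = stack (map b [0..<N])"
  note A = stack_map[of N a d, OF ac, folded av_def]
  note B = stack_map[of N b d, OF bc, folded bv_def]
  have xc: "x \<in> carrier_vec (sum d {..<N})" using x by (simp add: stacked_prod_def)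
  have "x = av + bv"
    by (rule block_ext[OF xc]) (use A B ab a_def b_def block_add in auto)
  moreover have "av \<in> stacked_prod d N S" using A ab a_def by (auto simp: stacked_prod_def)
  moreover have "bv \<in> scaled_ball (sum d {..<N}) R"
    unfolding scaled_ball_def
  proof (intro CollectI conjI allI impI)
    show "bv \<in> carrier_vec (sum d {..<N})" using B by simp
    fix k assume "k < sum d {..<N}"
    then obtain i k' where i: "i < N" "k' < d i" "k = sum d {..<i} + k'" using decomp by force
    have "bv $ k = block d i bv $ k'" using i by (simp add: block_def)
    also have "\<dots> = b i $ k'" using B i by simp
    finally have "\<bar>bv $ k\<bar> \<le> r i" using ab[OF i(1)] i b_def by (auto simp: scaled_ball_def)
    thus "\<bar>bv $ k\<bar> \<le> R" using r i by force
  qed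
  ultimately show ?thesis unfolding inflate_def by blast
qed

lemma sub_unfold:
  assumes "sub_relaxed_safety_controller nd md A B D Zi Wi Xi Ui \<delta> C"
  shows "\<And>x. C x \<subseteq> inflate md Ui \<delta>" "ctrl_dom C \<subseteq> inflate nd Xi \<delta>"
    "\<And>x u z w. x\<in>ctrl_dom C \<Longrightarrow> u\<in>C x \<Longrightarrow> z\<in>Zi \<Longrightarrow> w\<in>Wi \<Longrightarrow> A *\<^sub>v x + B *\<^sub>v u + D *\<^sub>v z + w \<in> ctrl_dom C"
  using assms unfolding sub_relaxed_safety_controller_def by blast+

lemma stack_map1: fixes N :: nat assumes "\<forall>i<N. f i \<in> carrier_vec (d i)"
  shows "stack (map f [0..<N]) \<in> carrier_vec (sum d {..<N})"
  by (rule stack_map(1)) (use assms in blast)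

lemma stack_map2: fixes N :: nat assumes "\<forall>i<N. f i \<in> carrier_vec (d i)" and "i < N"
  shows "block d i (stack (map f [0..<N])) = f i"
  by (rule stack_map(2)) (use assms in blast)+


theorem theorem3:
  fixes N :: nat
    and n m :: "nat \<Rightarrow> nat"
    and pp :: "nat \<Rightarrow> nat \<Rightarrow> nat"
    and A B D :: "nat \<Rightarrow> real mat"
    and H :: "nat \<Rightarrow> nat \<Rightarrow> real mat"
    and X U W :: "nat \<Rightarrow> real vec set"
    and Z :: "nat \<Rightarrow> nat \<Rightarrow> real vec set"
    and \<delta> :: "nat \<Rightarrow> real"
    and Csub :: "nat \<Rightarrow> real vec \<Rightarrow> real vec set"
  assumes N: "N \<ge> 1"
    and A_dim: "\<And>i. i < N \<Longrightarrow> A i \<in> carrier_mat (n i) (n i)"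
    and B_dim: "\<And>i. i < N \<Longrightarrow> B i \<in> carrier_mat (n i) (m i)"
    and D_dim: "\<And>i. i < N \<Longrightarrow> D i \<in> carrier_mat (n i) (\<Sum>j\<leftarrow>others N i. pp i j)"
    and H_dim: "\<And>i j. i < N \<Longrightarrow> j < N \<Longrightarrow> i \<noteq> j \<Longrightarrow> H i j \<in> carrier_mat (pp j i) (n i)"
    and X_cpt: "\<And>i. i < N \<Longrightarrow> compact_in_R (n i) (X i)"
    and U_cpt: "\<And>i. i < N \<Longrightarrow> compact_in_R (m i) (U i)"
    and W_cpt: "\<And>i. i < N \<Longrightarrow> compact_in_R (n i) (W i)"
    and Z_cpt: "\<And>i j. i < N \<Longrightarrow> j < N \<Longrightarrow> i \<noteq> j \<Longrightarrow> compact_in_R (pp i j) (Z i j)"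
    and Z_cover: "\<And>i j. i < N \<Longrightarrow> j < N \<Longrightarrow> i \<noteq> j \<Longrightarrow>
                    (\<lambda>v. H j i *\<^sub>v v) ` inflate (n j) (X j) (\<delta> j) \<subseteq> Z i j"
    and \<delta>_nonneg: "\<And>i. i < N \<Longrightarrow> \<delta> i \<ge> 0"
    and Csub: "\<And>i. i < N \<Longrightarrow>
                 sub_relaxed_safety_controller (n i) (m i) (A i) (B i) (D i) (Z_set N Z i) (W i)
                   (X i) (U i) (\<delta> i) (Csub i)"
  shows "relaxed_safety_controller (\<Sum>i<N. n i) (\<Sum>i<N. m i)
           (interconnection N n m A B D H) (stacked_prod n N W)
           (stacked_prod n N X) (stacked_prod m N U)
           (Max ((\<lambda>i. \<bar>\<delta> i\<bar>) ` {..<N}))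
           (\<lambda>x. if x \<in> stacked_prod n N (\<lambda>i. inflate (n i) (X i) (\<delta> i))
                then {u \<in> stacked_prod m N (\<lambda>i. inflate (m i) (U i) (\<delta> i)).
                        \<forall>i<N. block m i u \<in> Csub i (block n i x)}
                else {})"
proof -
  define M where "M = Max ((\<lambda>i. \<bar>\<delta> i\<bar>) ` {..<N})"
  have dM: "\<delta> i \<le> M" if i: "i < N" for i
  proof -
    have "\<bar>\<delta> i\<bar> \<in> (\<lambda>i. \<bar>\<delta> i\<bar>) ` {..<N}" using i by simp
    hence "\<bar>\<delta> i\<bar> \<le> M" unfolding M_def by (intro Max_ge) simp_all
    thus ?thesis by linarith
  qed
  have Xc: "\<And>i. i < N \<Longrightarrow> X i \<subseteq> carrier_vec (n i)" using X_cpt by (simp add: compact_in_R_def)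
  have Uc: "\<And>i. i < N \<Longrightarrow> U i \<subseteq> carrier_vec (m i)" using U_cpt by (simp add: compact_in_R_def)
  have infc: "inflate d S r \<subseteq> carrier_vec d" if "S \<subseteq> carrier_vec d" for d S r
  proof
    fix y assume "y \<in> inflate d S r"
    then obtain a b where "y = a + b" "a \<in> S" "b \<in> scaled_ball d r" unfolding inflate_def by blast
    thus "y \<in> carrier_vec d" using that unfolding scaled_ball_def by auto
  qed
  define C where "C = (\<lambda>x. if x \<in> stacked_prod n N (\<lambda>i. inflate (n i) (X i) (\<delta> i))
                then {u \<in> stacked_prod m N (\<lambda>i. inflate (m i) (U i) (\<delta> i)).
                        \<forall>i<N. block m i u \<in> Csub i (block n i x)}
                else {})"
  have P1: "\<forall>x. C x \<subseteq> inflate (\<Sum>i<N. m i) (stacked_prod m N U) M"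
  proof (intro allI subsetI)
    fix x u assume "u \<in> C x"
    hence "u \<in> stacked_prod m N (\<lambda>i. inflate (m i) (U i) (\<delta> i))" unfolding C_def by (simp split: if_splits)
    thus "u \<in> inflate (\<Sum>i<N. m i) (stacked_prod m N U) M" by (rule L5[where r=\<delta>, OF _ Uc dM])
  qed
  have P2: "ctrl_dom C \<subseteq> inflate (\<Sum>i<N. n i) (stacked_prod n N X) M"
  proof
    fix x assume "x \<in> ctrl_dom C"
    hence "x \<in> stacked_prod n N (\<lambda>i. inflate (n i) (X i) (\<delta> i))" unfolding ctrl_dom_def C_def by (simp split: if_splits)
    thus "x \<in> inflate (\<Sum>i<N. n i) (stacked_prod n N X) M" by (rule L5[where r=\<delta>, OF _ Xc dM])
  qed
  have P3: "\<forall>x\<in>ctrl_dom C. \<forall>u\<in>C x. \<forall>w\<in>stacked_prod n N W. interconnection N n m A B D H x u w \<in> ctrl_dom C"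
  proof (intro ballI)
    fix x u w assume xd: "x \<in> ctrl_dom C" and uC: "u \<in> C x" and w: "w \<in> stacked_prod n N W"
    have xX: "x \<in> stacked_prod n N (\<lambda>i. inflate (n i) (X i) (\<delta> i))" using xd unfolding ctrl_dom_def C_def by (simp split: if_splits)
    have uCi: "\<And>i. i < N \<Longrightarrow> block m i u \<in> Csub i (block n i x)" using uC xX unfolding C_def by simp
    define fi where "fi = (\<lambda>i. A i *\<^sub>v block n i x + B i *\<^sub>v block m i u
                     + D i *\<^sub>v internal_input N n H i x + block n i w)"
    have fc: "\<And>i. i < N \<Longrightarrow> fi i \<in> carrier_vec (n i)"
    proof -
      fix i assume i: "i < N"
      show "fi i \<in> carrier_vec (n i)" unfolding fi_def
      proof (intro add_carrier_vec)
        show "A i *\<^sub>v block n i x \<in> carrier_vec (n i)"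
          by (rule carrier_vecI, unfold dim_mult_mat_vec, rule carrier_matD(1)[OF A_dim[OF i]])
        show "B i *\<^sub>v block m i u \<in> carrier_vec (n i)"
          by (rule carrier_vecI, unfold dim_mult_mat_vec, rule carrier_matD(1)[OF B_dim[OF i]])
        show "D i *\<^sub>v internal_input N n H i x \<in> carrier_vec (n i)"
          by (rule carrier_vecI, unfold dim_mult_mat_vec, rule carrier_matD(1)[OF D_dim[OF i]])
        show "block n i w \<in> carrier_vec (n i)" unfolding block_def by (rule vec_carrier)
      qed
    qed
    have fc': "\<forall>i<N. fi i \<in> carrier_vec (n i)" using fc by blast
    note F = stack_map1[OF fc'] stack_map2[OF fc']
    have feq: "interconnection N n m A B D H x u w = stack (map fi [0..<N])"
      unfolding interconnection_def fi_def by (rule refl)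
    have fdom: "fi i \<in> ctrl_dom (Csub i) \<and> fi i \<in> inflate (n i) (X i) (\<delta> i)" if i: "i < N" for i
    proof -
      have S: "sub_relaxed_safety_controller (n i) (m i) (A i) (B i) (D i) (Z_set N Z i) (W i)
                   (X i) (U i) (\<delta> i) (Csub i)" using Csub i .
      note inv = sub_unfold(3)[OF S] and dsub = sub_unfold(2)[OF S]
      have xi: "block n i x \<in> ctrl_dom (Csub i)" using uCi[OF i] unfolding ctrl_dom_def by blast
      have z: "internal_input N n H i x \<in> Z_set N Z i"
        unfolding internal_input_def Z_set_def
      proof (intro CollectI exI conjI ballI)
        fix j assume j: "j \<in> set (others N i)"
        hence j': "j < N" "j \<noteq> i" by (auto simp: others_def)
        have "block n j x \<in> inflate (n j) (X j) (\<delta> j)" using xX j' by (simp add: stacked_prod_def)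
        thus "H j i *\<^sub>v block n j x \<in> Z i j" using Z_cover[OF i j'(1)] j' by blast
      qed (rule refl)
      have wi: "block n i w \<in> W i" using w i by (simp add: stacked_prod_def)
      have "fi i \<in> ctrl_dom (Csub i)" unfolding fi_def
        by (rule inv[OF xi uCi[OF i] z wi])
      thus ?thesis using dsub by blast
    qed
    have "\<forall>i\<in>{..<N}. \<exists>v. v \<in> Csub i (fi i)" unfolding ctrl_dom_def
      proof
        fix i assume "i \<in> {..<N}"
        hence "fi i \<in> ctrl_dom (Csub i)" using fdom by simp
        thus "\<exists>v. v \<in> Csub i (fi i)" unfolding ctrl_dom_def by blast
      qed
    then obtain u' where u': "\<And>i. i < N \<Longrightarrow> u' i \<in> Csub i (fi i)"
      using bchoice[of "{..<N}" "\<lambda>i v. v \<in> Csub i (fi i)"] by auto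
    have u'U: "u' i \<in> inflate (m i) (U i) (\<delta> i)" if "i < N" for i
      using u'[OF that] sub_unfold(1)[OF Csub[OF that]] by (rule rev_subsetD)
    have u'c: "u' i \<in> carrier_vec (m i)" if i: "i < N" for i
      using u'U[OF i] infc[OF Uc[OF i]] by (rule rev_subsetD)
    have u'c': "\<forall>i<N. u' i \<in> carrier_vec (m i)" using u'c by blast
    note UU = stack_map1[OF u'c'] stack_map2[OF u'c']
    have sf: "stack (map fi [0..<N]) \<in> stacked_prod n N (\<lambda>i. inflate (n i) (X i) (\<delta> i))"
      unfolding stacked_prod_def
    proof (intro CollectI conjI allI impI)
      show "stack (map fi [0..<N]) \<in> carrier_vec (sum n {..<N})" by (rule F(1))
      fix i assume i: "i < N"
      show "block n i (stack (map fi [0..<N])) \<in> inflate (n i) (X i) (\<delta> i)"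
        unfolding F(2)[OF i] using fdom[OF i] by (rule conjunct2)
    qed
    have su: "stack (map u' [0..<N]) \<in> stacked_prod m N (\<lambda>i. inflate (m i) (U i) (\<delta> i))"
      unfolding stacked_prod_def
    proof (intro CollectI conjI allI impI)
      show "stack (map u' [0..<N]) \<in> carrier_vec (sum m {..<N})" by (rule UU(1))
      fix i assume i: "i < N"
      show "block m i (stack (map u' [0..<N])) \<in> inflate (m i) (U i) (\<delta> i)"
        unfolding UU(2)[OF i] by (rule u'U[OF i])
    qed
    have "stack (map u' [0..<N]) \<in> C (stack (map fi [0..<N]))"
      unfolding C_def if_P[OF sf]
    proof (intro CollectI conjI allI impI su)
      fix i assume i: "i < N"
      show "block m i (stack (map u' [0..<N])) \<in> Csub i (block n i (stack (map fi [0..<N])))"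
        unfolding UU(2)[OF i] F(2)[OF i] by (rule u'[OF i])
    qed
    hence "C (stack (map fi [0..<N])) \<noteq> {}" by (rule ex_in_conv[THEN iffD1, OF exI])
    thus "interconnection N n m A B D H x u w \<in> ctrl_dom C" unfolding feq ctrl_dom_def by (rule CollectI)
  qed
  have "relaxed_safety_controller (\<Sum>i<N. n i) (\<Sum>i<N. m i)
           (interconnection N n m A B D H) (stacked_prod n N W)
           (stacked_prod n N X) (stacked_prod m N U) M C"
    unfolding relaxed_safety_controller_def using P1 P2 P3 by blast
  thus ?thesis unfolding M_def C_def .
qed

end
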